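(* Let $A^*\in\mathbb C^{N\times n}$ be isometric ($AA^*=I_n$), $x_0\in\mathbb C^n$, $b=|A^*x_0|$, and let $\mathcal X$ be one of $\mathbb C^n,\mathbb R^n,\mathbb R^n_+$. Let $x_*$ be a fixed point of AP in the sense that there is $u\in\mathbb C^N$ with $|u(j)|=1$ for all $j$ and $u(j)=1$ whenever $(A^*x_* )(j)\ne0$, such that $x_*=\big[A\big(b\odot u\odot\frac{A^*x_*}{|A^*x_*|}\big)\big]_{\mathcal X}$. Then $\|x_*\|\le\|b\|$, and if $\|x_*\|=\|b\|$ then $x_*\in\mathcal X$ and $|A^*x_*|=b$ (i.e. $x_*$ solves the phase retrieval problem). Equivalently, if $x_*$ is not a phase retrieval solution then $\|x_*\|<\|b\|$.
   Context: $|y|$ is the componentwise modulus, $\odot$ the componentwise product, $y/|y|$ the componentwise quotient with convention $y(j)/|y(j)|:=1$ when $y(j)=0$; $[\cdot]_{\mathcal X}$ is the Euclidean projection onto the closed convex set $\mathcal X$. *)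

theory Defs
  imports "HOL-Analysis.Analysis"
begin

definition cadj :: "complex^'n^'m \<Rightarrow> complex^'m^'n" where
  "cadj A = (\<chi> i j. cnj (A $ j $ i))"

definition phase :: "complex \<Rightarrow> complex" where
  "phase z = (if z = 0 then 1 else z / complex_of_real (cmod z))"

definition cabs_vec :: "complex^'n \<Rightarrow> real^'n" where
  "cabs_vec y = (\<chi> j. cmod (y $ j))"

definition real_vecs :: "(complex^'n) set" where
  "real_vecs = {x. \<forall>i. x $ i \<in> \<real>}"

definition nonneg_vecs :: "(complex^'n) set" where
  "nonneg_vecs = {x. \<forall>i. x $ i \<in> \<real> \<and> Re (x $ i) \<ge> 0}"

end

theory Submission imports Defs begin

lemma cinner: "inner (z::complex) w = Re (z * cnj w)"
  by (simp add: inner_complex_def)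

lemma adj: fixes A :: "complex^'N^'n" and v :: "complex^'N" and y :: "complex^'n"
  shows "inner (A *v v) y = inner v (cadj A *v y)"
proof -
  have "inner (A *v v) y = (\<Sum>i\<in>UNIV. \<Sum>j\<in>UNIV. Re (A$i$j * v$j * cnj (y$i)))"
    by (simp add: inner_vec_def cinner matrix_vector_mult_def sum_distrib_right Re_sum)
  also have "\<dots> = (\<Sum>j\<in>UNIV. \<Sum>i\<in>UNIV. Re (A$i$j * v$j * cnj (y$i)))"
    by (rule sum.swap)
  also have "\<dots> = inner v (cadj A *v y)"
    by (simp add: inner_vec_def cinner matrix_vector_mult_def cadj_def sum_distrib_left Re_sum cnj_sum mult_ac)
  finally show ?thesis .
qed

lemma closed_real_vecs: "closed (real_vecs :: (complex^'n) set)"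
proof -
  have "real_vecs = (\<Inter>i. {x::complex^'n. Im (x$i) = 0})"
    by (auto simp: real_vecs_def complex_is_Real_iff)
  moreover have "closed {x::complex^'n. Im (x$i) = 0}" for i
    by (intro closed_Collect_eq continuous_intros)
  ultimately show ?thesis by (metis closed_INT closed_Int)
qed

lemma closed_nonneg_vecs: "closed (nonneg_vecs :: (complex^'n) set)"
proof -
  have "nonneg_vecs = (\<Inter>i. {x::complex^'n. Im (x$i) = 0}) \<inter> (\<Inter>i. {x::complex^'n. 0 \<le> Re (x$i)})"
    by (auto simp: nonneg_vecs_def complex_is_Real_iff)
  moreover have "closed {x::complex^'n. Im (x$i) = 0}" for i
    by (intro closed_Collect_eq continuous_intros)
  moreover have "closed {x::complex^'n. 0 \<le> Re (x$i)}" for i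
    by (intro closed_Collect_le continuous_intros)
  ultimately show ?thesis by (metis closed_INT closed_Int)
qed

lemma convex_real_vecs: "convex (real_vecs :: (complex^'n) set)"
  unfolding convex_def real_vecs_def by (auto simp: complex_is_Real_iff)

lemma convex_nonneg_vecs: "convex (nonneg_vecs :: (complex^'n) set)"
  unfolding convex_def nonneg_vecs_def by (auto simp: complex_is_Real_iff)

lemma proj_ineq:
  fixes w :: "'a::euclidean_space"
  assumes "convex S" "closed S" "0 \<in> S"
  shows "(norm (closest_point S w))^2 + (norm (w - closest_point S w))^2 \<le> (norm w)^2"
proof -
  let ?p = "closest_point S w"
  have "inner (w - ?p) (0 - ?p) \<le> 0" by (rule closest_point_dot[OF assms])
  hence h: "inner (w - ?p) ?p \<ge> 0" by (simp add: inner_minus_right)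
  have "w = ?p + (w - ?p)" by simp
  hence "(norm w)^2 = (norm ?p)^2 + 2 * inner (w - ?p) ?p + (norm (w - ?p))^2"
    using dot_norm[of ?p "w - ?p"] by (simp add: inner_commute)
  thus ?thesis using h by linarith
qed

lemma phase_norm: "cmod (phase z) = 1"
  by (simp add: phase_def norm_divide)

theorem mainTheorem4:
  fixes A :: "complex^'N^'n" and x0 xs :: "complex^'n"
    and u :: "complex^'N" and b :: "real^'N" and X :: "(complex^'n) set"
  assumes iso: "A ** cadj A = mat 1"
    and b_def: "b = cabs_vec (cadj A *v x0)"
    and X_choice: "X = UNIV \<or> X = real_vecs \<or> X = nonneg_vecs"
    and u_unit: "\<forall>j. cmod (u $ j) = 1"
    and u_one: "\<forall>j. (cadj A *v xs) $ j \<noteq> 0 \<longrightarrow> u $ j = 1"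
    and fixp: "xs = closest_point X
               (A *v (\<chi> j. complex_of_real (b $ j) * u $ j * phase ((cadj A *v xs) $ j)))"
  shows "norm xs \<le> norm b \<and>
         (norm xs = norm b \<longrightarrow> xs \<in> X \<and> cabs_vec (cadj A *v xs) = b)"
proof -
  define v where "v = (\<chi> j. complex_of_real (b $ j) * u $ j * phase ((cadj A *v xs) $ j))"
  define w where "w = A *v v"
  have xsw: "xs = closest_point X w" using fixp by (simp add: v_def w_def)
  have bnn: "b $ j \<ge> 0" for j by (simp add: b_def cabs_vec_def)
  have XX: "convex X" "closed X" "0 \<in> X"
    using X_choice closed_real_vecs convex_real_vecs closed_nonneg_vecs convex_nonneg_vecs
    by (auto simp: real_vecs_def nonneg_vecs_def)
  have vabs: "cmod (v $ j) = b $ j" for j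
    using bnn[of j] u_unit by (simp add: v_def norm_mult phase_norm)
  have nv: "norm v = norm b"
    unfolding norm_vec_def using vabs by (simp add: real_norm_def bnn)
  have isoN: "norm (cadj A *v y) = norm y" for y :: "complex^'n"
  proof -
    have "inner (cadj A *v y) (cadj A *v y) = inner (A *v (cadj A *v y)) y"
      by (simp add: adj)
    also have "\<dots> = inner y y" by (simp add: matrix_vector_mul_assoc iso)
    finally show ?thesis by (simp add: norm_eq_sqrt_inner)
  qed
  have sq: "(norm w)^2 = inner v (cadj A *v w)"
    by (simp add: w_def adj[symmetric] power2_norm_eq_inner)
  have wv: "norm w \<le> norm v"
  proof -
    have "(norm w)^2 \<le> norm v * norm (cadj A *v w)"
      using sq Cauchy_Schwarz_ineq2[of v "cadj A *v w"] by simp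
    hence "norm w * norm w \<le> norm v * norm w" by (simp add: isoN power2_eq_square)
    thus ?thesis
    proof (cases "norm w = 0")
      case True thus ?thesis by simp
    next
      case False
      hence "norm w > 0" by simp
      thus ?thesis using \<open>norm w * norm w \<le> norm v * norm w\<close> mult_right_le_imp_le by blast
    qed
  qed
  have pi: "(norm xs)^2 + (norm (w - xs))^2 \<le> (norm w)^2"
    using proj_ineq[OF XX, of w] xsw by simp
  hence xw: "norm xs \<le> norm w"
  proof -
    have "(norm xs)^2 \<le> (norm w)^2" using pi zero_le_power2[of "norm (w - xs)"] by linarith
    thus ?thesis using power2_le_imp_le norm_ge_zero by blast
  qed
  have xsX: "xs \<in> X" using xsw closest_point_in_set[OF XX(2)] XX(3) by blast
  show ?thesis
  proof (intro conjI impI)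
    show "norm xs \<le> norm b" using xw wv nv by simp
    assume eq: "norm xs = norm b"
    show "xs \<in> X" by (rule xsX)
    have nw: "norm w = norm v" using eq xw wv nv by simp
    hence "(norm (w - xs))^2 \<le> 0" using pi eq nv by simp
    hence "w = xs" by simp
    have "(norm (v - cadj A *v w))^2 = (norm v)^2 - 2 * inner v (cadj A *v w) + (norm (cadj A *v w))^2"
      by (simp add: power2_norm_eq_inner inner_diff_left inner_diff_right inner_commute)
    also have "\<dots> = 0" using sq nw isoN[of w] by simp
    finally have "v = cadj A *v xs" using \<open>w = xs\<close> by simp
    thus "cabs_vec (cadj A *v xs) = b"
      by (simp add: cabs_vec_def vec_eq_iff vabs[symmetric])
  qed
qed

end
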